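(* Let $T:C_e^\infty(S^{n-1})\to C_e^\infty(S^{n-1})$ be a linear operator and let $p>1$. Suppose $g\in C_e^\infty(S^{n-1})$ is strictly positive and $g^{p-1}\notin{\rm Pos}(T)$. Then there exists a strictly positive $f\in C_e^\infty(S^{n-1})$ such that $Tf(x)\le Tg(x)$ for every $x\in S^{n-1}$, but $\|f\|_{L_p(S^{n-1})}>\|g\|_{L_p(S^{n-1})}$.
   Context: $C_e^\infty(S^{n-1})$ is the space of even real-valued infinitely differentiable functions on $S^{n-1}$, ordered pointwise; "strictly positive" means $>0$ everywhere. For a linear operator $T:C_e^\infty(S^{n-1})\to C_e^\infty(S^{n-1})$, ${\rm Pos}(T)$ is the set of $h\in C_e^\infty(S^{n-1})$ such that $\int_{S^{n-1}}\phi(x)h(x)\,dx\ge 0$ for every $\phi\in C_e^\infty(S^{n-1})$ with $T\phi(x)\ge 0$ for all $x\in S^{n-1}$. Integrals and $L_p$ norms are with respect to surface measure on $S^{n-1}$. *)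

theory Defs
  imports "HOL-Analysis.Analysis"
begin

primrec diff_k :: "nat \<Rightarrow> 'a::euclidean_space set \<Rightarrow> ('a \<Rightarrow> real) \<Rightarrow> bool" where
  "diff_k 0 S f = True"
| "diff_k (Suc k) S f =
     ((\<forall>x\<in>S. f differentiable (at x)) \<and>
      (\<forall>b\<in>Basis. diff_k k S (\<lambda>x. frechet_derivative f (at x) b)))"

definition smooth_on :: "'a::euclidean_space set \<Rightarrow> ('a \<Rightarrow> real) \<Rightarrow> bool" where
  "smooth_on S f \<longleftrightarrow> (\<forall>k. diff_k k S f)"

abbreviation Sph :: "'a::euclidean_space set" where
  "Sph \<equiv> sphere 0 1"

text \<open>C_e^\<infinity>(S^{n-1}): even smooth functions on the sphere, represented extensionally
  (value 0 off the sphere). Smoothness on the sphere = smoothness of the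
  0-homogeneous extension on R^n minus the origin.\<close>
definition Ce :: "('a::euclidean_space \<Rightarrow> real) set" where
  "Ce = {h. smooth_on (- {0}) (\<lambda>x. h (x /\<^sub>R norm x))
            \<and> (\<forall>x\<in>Sph. h (- x) = h x)
            \<and> (\<forall>x. x \<notin> Sph \<longrightarrow> h x = 0)}"

text \<open>Integral w.r.t. surface measure on the sphere, via the polar/cone formula
  \<integral>_{S} f d\<sigma> = n \<integral>_{B} f(x/|x|) dx.\<close>
definition sph_integral :: "('a::euclidean_space \<Rightarrow> real) \<Rightarrow> real" where
  "sph_integral f = real DIM('a) * integral (ball 0 1) (\<lambda>x. f (x /\<^sub>R norm x))"

definition Lp_norm :: "real \<Rightarrow> ('a::euclidean_space \<Rightarrow> real) \<Rightarrow> real" where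
  "Lp_norm p f = (sph_integral (\<lambda>x. \<bar>f x\<bar> powr p)) powr (1 / p)"

definition linear_op_Ce :: "(('a::euclidean_space \<Rightarrow> real) \<Rightarrow> ('a \<Rightarrow> real)) \<Rightarrow> bool" where
  "linear_op_Ce T \<longleftrightarrow> (\<forall>f\<in>Ce. T f \<in> Ce)
     \<and> (\<forall>f\<in>Ce. \<forall>g\<in>Ce. T (\<lambda>x. f x + g x) = (\<lambda>x. T f x + T g x))
     \<and> (\<forall>f\<in>Ce. \<forall>c::real. T (\<lambda>x. c * f x) = (\<lambda>x. c * T f x))"

definition Pos :: "(('a::euclidean_space \<Rightarrow> real) \<Rightarrow> ('a \<Rightarrow> real)) \<Rightarrow> ('a \<Rightarrow> real) set" where
  "Pos T = {h\<in>Ce. \<forall>\<phi>\<in>Ce. (\<forall>x\<in>Sph. T \<phi> x \<ge> 0) \<longrightarrow> sph_integral (\<lambda>x. \<phi> x * h x) \<ge> 0}"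

end

theory Submission
  imports Defs
begin


lemma sph_integrable:
  fixes F :: "'a::euclidean_space \<Rightarrow> real"
  assumes F: "continuous_on Sph F"
  shows "(\<lambda>x. F (x /\<^sub>R norm x)) integrable_on ball 0 1"
proof -
  have cs: "compact (F ` Sph)" using F compact_continuous_image compact_sphere by blast
  then obtain B where B: "\<And>y. y \<in> Sph \<Longrightarrow> norm (F y) \<le> B"
    using compact_imp_bounded bounded_iff by (metis imageI)
  have cn: "continuous_on (ball 0 1 - {0}) (\<lambda>x::'a. x /\<^sub>R norm x)"
    by (intro continuous_intros) auto
  have im: "(\<lambda>x::'a. x /\<^sub>R norm x) ` (ball 0 1 - {0}) \<subseteq> Sph" by (auto simp: field_simps split: if_splits)
  have c: "continuous_on (ball 0 1 - {0}) (\<lambda>x. F (x /\<^sub>R norm x))"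
    using continuous_on_compose2[OF F cn im] .
  have "(\<lambda>x. F (x /\<^sub>R norm x)) integrable_on (ball 0 1 - {0})"
  proof (rule measurable_bounded_by_integrable_imp_integrable)
    show "(\<lambda>x. F (x /\<^sub>R norm x)) \<in> borel_measurable (lebesgue_on (ball 0 1 - {0}))"
      by (rule continuous_imp_measurable_on_sets_lebesgue[OF c]) auto
    show "(\<lambda>x. B) integrable_on (ball 0 1 - {0})"
      by (rule integrable_on_const) (simp add: fmeasurable_Diff)
    show "norm (F (x /\<^sub>R norm x)) \<le> B" if "x \<in> ball 0 1 - {0}" for x
      using that by (intro B) auto
  qed auto
  then show ?thesis
    by (rule integrable_spike_set) (auto intro: negligible_subset[of "{0}"])
qed



lemma diff_k_mono: "diff_k (Suc k) S f \<Longrightarrow> diff_k k S f"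
proof (induction k arbitrary: f)
  case 0 then show ?case by simp
next
  case (Suc k) then show ?case by simp
qed

lemma fd_cong:
  assumes "open S" "x \<in> S" "\<And>y. y \<in> S \<Longrightarrow> f y = g y" "f differentiable (at x)"
  shows "g differentiable (at x) \<and> frechet_derivative g (at x) = frechet_derivative f (at x)"
proof -
  have "(f has_derivative frechet_derivative f (at x)) (at x)"
    using assms(4) frechet_derivative_works by blast
  then have "(g has_derivative frechet_derivative f (at x)) (at x)"
    using has_derivative_transform_within_open assms(1,2,3) by blast
  then show ?thesis using frechet_derivative_at differentiable_def by metis
qed

lemma fd_apply: "(f has_derivative f') (at x) \<Longrightarrow> frechet_derivative f (at x) b = f' b"
  by (drule frechet_derivative_at) simp

lemma diff_k_cong:
  assumes "open S" "\<And>y. y \<in> S \<Longrightarrow> f y = g y" "diff_k k S f"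
  shows "diff_k k S g"
  using assms(2,3)
proof (induction k arbitrary: f g)
  case 0 then show ?case by simp
next
  case (Suc k)
  have d: "\<forall>x\<in>S. f differentiable (at x)" using Suc.prems by simp
  have e: "g differentiable (at x) \<and> frechet_derivative g (at x) = frechet_derivative f (at x)" if "x \<in> S" for x
    by (rule fd_cong[OF assms(1) that]) (use Suc.prems d that in auto)
  show ?case
  proof (simp, intro conjI ballI)
    show "g differentiable at x" if "x \<in> S" for x using e that by blast
    fix b :: 'a assume b: "b \<in> Basis"
    have "diff_k k S (\<lambda>x. frechet_derivative f (at x) b)" using Suc.prems b by simp
    then show "diff_k k S (\<lambda>x. frechet_derivative g (at x) b)"
      by (rule Suc.IH[rotated]) (simp add: e)
  qed
qed

lemma diff_k_const: "diff_k k S (\<lambda>x. c)"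
proof (induction k arbitrary: c)
  case 0 then show ?case by simp
next
  case (Suc k)
  have "frechet_derivative (\<lambda>x. c) (at x) = (\<lambda>h. 0)" for x :: 'a
    by (rule frechet_derivative_at[symmetric]) (rule has_derivative_const)
  then show ?case using Suc by simp
qed

lemma diff_k_add:
  assumes "open S" "diff_k k S f" "diff_k k S g"
  shows "diff_k k S (\<lambda>x. f x + g x)"
  using assms(2,3)
proof (induction k arbitrary: f g)
  case 0 then show ?case by simp
next
  case (Suc k)
  have e: "frechet_derivative (\<lambda>x. f x + g x) (at x) b = frechet_derivative f (at x) b + frechet_derivative g (at x) b"
    if "x \<in> S" for x b
  proof -
    have "((\<lambda>x. f x + g x) has_derivative (\<lambda>h. frechet_derivative f (at x) h + frechet_derivative g (at x) h)) (at x)"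
      using Suc.prems that by (intro has_derivative_add) (simp_all add: frechet_derivative_works[symmetric])
    then show ?thesis by (rule fd_apply)
  qed
  show ?case
  proof (simp, intro conjI ballI)
    show "(\<lambda>x. f x + g x) differentiable at x" if "x \<in> S" for x
      using Suc.prems that by (intro differentiable_add) simp_all
    fix b :: 'a assume b: "b \<in> Basis"
    have "diff_k k S (\<lambda>x. frechet_derivative f (at x) b + frechet_derivative g (at x) b)"
      using Suc.prems b by (intro Suc.IH) simp_all
    then show "diff_k k S (\<lambda>x. frechet_derivative (\<lambda>x. f x + g x) (at x) b)"
      by (rule diff_k_cong[OF assms(1), rotated]) (simp add: e)
  qed
qed

lemma diff_k_mult:
  assumes "open S" "diff_k k S f" "diff_k k S g"
  shows "diff_k k S (\<lambda>x. f x * g x)"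
  using assms(2,3)
proof (induction k arbitrary: f g)
  case 0 then show ?case by simp
next
  case (Suc k)
  have e: "frechet_derivative (\<lambda>x. f x * g x) (at x) b = f x * frechet_derivative g (at x) b + frechet_derivative f (at x) b * g x"
    if "x \<in> S" for x b
  proof -
    have "((\<lambda>x. f x * g x) has_derivative (\<lambda>h. f x * frechet_derivative g (at x) h + frechet_derivative f (at x) h * g x)) (at x)"
      using Suc.prems that by (intro has_derivative_mult) (simp_all add: frechet_derivative_works[symmetric])
    then show ?thesis by (rule fd_apply)
  qed
  show ?case
  proof (simp, intro conjI ballI)
    show "(\<lambda>x. f x * g x) differentiable at x" if "x \<in> S" for x
      using Suc.prems that by (intro differentiable_mult) simp_all
    fix b :: 'a assume b: "b \<in> Basis"
    have fk: "diff_k k S f" "diff_k k S g" using Suc.prems diff_k_mono by blast+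
    have "diff_k k S (\<lambda>x. f x * frechet_derivative g (at x) b + frechet_derivative f (at x) b * g x)"
      using Suc.prems b fk by (intro diff_k_add[OF assms(1)] Suc.IH) simp_all
    then show "diff_k k S (\<lambda>x. frechet_derivative (\<lambda>x. f x * g x) (at x) b)"
      by (rule diff_k_cong[OF assms(1), rotated]) (simp add: e)
  qed
qed

lemma diff_k_cmul:
  assumes "open S" "diff_k k S f"
  shows "diff_k k S (\<lambda>x. c * f x)"
  using diff_k_mult[OF assms(1) diff_k_const assms(2)] .

lemma diff_k_powr:
  assumes "open S" "diff_k k S G" "\<And>x. x \<in> S \<Longrightarrow> G x > 0"
  shows "diff_k k S (\<lambda>x. G x powr q)"
  using assms(2,3)
proof (induction k arbitrary: G q)
  case 0 then show ?case by simp
next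
  case (Suc k)
  have hd: "((\<lambda>x. G x powr q) has_derivative (\<lambda>h. q * (G x powr (q - 1) * frechet_derivative G (at x) h))) (at x)"
    if "x \<in> S" for x
  proof -
    have gd: "(G has_derivative frechet_derivative G (at x)) (at x)"
      using Suc.prems(1) that by (simp add: frechet_derivative_works[symmetric])
    have pos: "G x > 0" using Suc.prems(2) that by blast
    have "((\<lambda>x. G x powr q) has_derivative (\<lambda>h. G x powr q * (0 * ln (G x) + frechet_derivative G (at x) h * q / G x))) (at x)"
      by (rule has_derivative_powr[OF gd has_derivative_const]) (use pos in auto)
    moreover have "(\<lambda>h. G x powr q * (0 * ln (G x) + frechet_derivative G (at x) h * q / G x))
       = (\<lambda>h. q * (G x powr (q - 1) * frechet_derivative G (at x) h))"
      using pos by (auto simp: powr_diff fun_eq_iff)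
    ultimately show ?thesis by simp
  qed
  have e: "frechet_derivative (\<lambda>x. G x powr q) (at x) b = q * (G x powr (q - 1) * frechet_derivative G (at x) b)"
    if "x \<in> S" for x b
    using fd_apply[OF hd[OF that]] by simp
  show ?case
  proof (simp, intro conjI ballI)
    show "(\<lambda>x. G x powr q) differentiable at x" if "x \<in> S" for x
      using hd[OF that] differentiable_def by blast
    fix b :: 'a assume b: "b \<in> Basis"
    have fk: "diff_k k S G" using Suc.prems diff_k_mono by blast+
    have "diff_k k S (\<lambda>x. q * (G x powr (q - 1) * frechet_derivative G (at x) b))"
      using Suc.prems b fk by (intro diff_k_cmul[OF assms(1)] diff_k_mult[OF assms(1)] Suc.IH) simp_all
    then show "diff_k k S (\<lambda>x. frechet_derivative (\<lambda>x. G x powr q) (at x) b)"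
      by (rule diff_k_cong[OF assms(1), rotated]) (simp add: e)
  qed
qed



lemma open_nz: "open (- {0::'a::euclidean_space})" by auto

lemma Ce_cont:
  fixes f :: "'a::euclidean_space \<Rightarrow> real"
  assumes "f \<in> Ce" shows "continuous_on Sph f"
proof -
  have "diff_k (Suc 0) (- {0}) (\<lambda>x. f (x /\<^sub>R norm x))"
    using assms unfolding Ce_def smooth_on_def by blast
  then have "\<forall>x\<in>- {0}. (\<lambda>x. f (x /\<^sub>R norm x)) differentiable (at x)" by simp
  then have "continuous_on (- {0}) (\<lambda>x. f (x /\<^sub>R norm x))"
    by (intro continuous_at_imp_continuous_on) (auto intro: differentiable_imp_continuous_within)
  then have "continuous_on Sph (\<lambda>x. f (x /\<^sub>R norm x))"
    by (rule continuous_on_subset) auto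
  then show ?thesis
    by (rule continuous_on_eq) auto
qed

lemma Ce_add:
  fixes u v :: "'a::euclidean_space \<Rightarrow> real"
  assumes "u \<in> Ce" "v \<in> Ce" shows "(\<lambda>x. u x + v x) \<in> Ce"
  using assms unfolding Ce_def smooth_on_def
  by (auto intro: diff_k_add[OF open_nz])

lemma Ce_cmul:
  fixes u :: "'a::euclidean_space \<Rightarrow> real"
  assumes "u \<in> Ce" shows "(\<lambda>x. c * u x) \<in> Ce"
  using assms unfolding Ce_def smooth_on_def
  by (auto intro: diff_k_cmul[OF open_nz])

lemma tangent_powr:
  fixes a b p :: real
  assumes "a > 0" "b > 0" "p \<ge> 1"
  shows "a powr p \<ge> b powr p + p * b powr (p - 1) * (a - b)"
proof -
  have "a powr p - b powr p \<ge> (p * b powr (p - 1)) * (a - b)"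
  proof (rule convex_on_imp_above_tangent[OF powr_convex[OF assms(3)] connected_Ioi])
    show "b \<in> interior {0<..}" using assms by (simp add: interior_open)
    show "a \<in> {0<..}" using assms by simp
    show "((\<lambda>x. x powr p) has_field_derivative p * b powr (p - 1)) (at b within {0<..})"
      using assms by (auto intro!: derivative_eq_intros)
  qed
  then show ?thesis by simp
qed



theorem lemma2:
  fixes T :: "('a::euclidean_space \<Rightarrow> real) \<Rightarrow> ('a \<Rightarrow> real)"
    and g :: "'a \<Rightarrow> real" and p :: real
  assumes "linear_op_Ce T"
    and "p > 1"
    and "g \<in> Ce"
    and "\<forall>x\<in>Sph. g x > 0"
    and "(\<lambda>x. if x \<in> Sph then g x powr (p - 1) else 0) \<notin> Pos T"
  shows "\<exists>f\<in>Ce. (\<forall>x\<in>Sph. f x > 0) \<and> (\<forall>x\<in>Sph. T f x \<le> T g x)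
               \<and> Lp_norm p f > Lp_norm p g"
proof -
  define h where "h = (\<lambda>x::'a. if x \<in> Sph then g x powr (p - 1) else 0)"
  have gCe: "smooth_on (- {0}) (\<lambda>x. g (x /\<^sub>R norm x))" "\<forall>x\<in>Sph. g (- x) = g x"
    "\<forall>x. x \<notin> Sph \<longrightarrow> g x = 0"
    using assms(3) unfolding Ce_def by auto
  have nrm: "x /\<^sub>R norm x \<in> Sph" if "x \<in> - {0}" for x :: 'a
    using that by auto
  have hCe: "h \<in> Ce"
    unfolding Ce_def
  proof (intro CollectI conjI allI ballI impI)
    show "smooth_on (- {0}) (\<lambda>x. h (x /\<^sub>R norm x))"
      unfolding smooth_on_def
    proof
      fix k
      have "diff_k k (- {0}) (\<lambda>x. g (x /\<^sub>R norm x) powr (p - 1))"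
        using gCe(1) assms(4) nrm unfolding smooth_on_def
        by (intro diff_k_powr[OF open_nz]) auto
      then show "diff_k k (- {0}) (\<lambda>x. h (x /\<^sub>R norm x))"
        by (rule diff_k_cong[OF open_nz, rotated]) (use nrm in \<open>auto simp: h_def\<close>)
    qed
    show "h (- x) = h x" if "x \<in> Sph" for x using that gCe(2) by (auto simp: h_def)
    show "h x = 0" if "x \<notin> Sph" for x using that by (auto simp: h_def)
  qed
  obtain \<phi> where phi: "\<phi> \<in> Ce" "\<forall>x\<in>Sph. T \<phi> x \<ge> 0"
      "\<not> sph_integral (\<lambda>x. \<phi> x * h x) \<ge> 0"
    using assms(5) hCe unfolding h_def[symmetric] Pos_def by auto
  have IC: "integral (ball 0 1) (\<lambda>x::'a. \<phi> (x /\<^sub>R norm x) * h (x /\<^sub>R norm x)) < 0"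
    using phi(3) unfolding sph_integral_def
    by (simp add: zero_le_mult_iff not_le)
  have Cint: "(\<lambda>x::'a. \<phi> (x /\<^sub>R norm x) * h (x /\<^sub>R norm x)) integrable_on ball 0 1"
    using IC not_integrable_integral by fastforce
  have Sne: "Sph \<noteq> ({} :: 'a set)"
  proof -
    obtain b :: 'a where "b \<in> Basis" using nonempty_Basis by blast
    then have "b \<in> Sph" by simp
    then show ?thesis by blast
  qed
  have gc: "continuous_on Sph g" using Ce_cont[OF assms(3)] .
  have pc: "continuous_on Sph \<phi>" using Ce_cont[OF phi(1)] .
  obtain x0 where x0: "x0 \<in> Sph" "\<forall>y\<in>Sph. g x0 \<le> g y"
    using continuous_attains_inf[OF compact_sphere Sne gc] by blast
  define m where "m = g x0"
  have m: "m > 0" "\<forall>y\<in>Sph. m \<le> g y" using x0 assms(4) by (auto simp: m_def)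
  have pac: "continuous_on Sph (\<lambda>x. \<bar>\<phi> x\<bar>)" using pc by (intro continuous_intros)
  obtain x1 where x1: "x1 \<in> Sph" "\<forall>y\<in>Sph. \<bar>\<phi> y\<bar> \<le> \<bar>\<phi> x1\<bar>"
    using continuous_attains_sup[OF compact_sphere Sne pac] by blast
  define M where "M = \<bar>\<phi> x1\<bar>"
  have M: "M \<ge> 0" "\<forall>y\<in>Sph. \<bar>\<phi> y\<bar> \<le> M" using x1 by (auto simp: M_def)
  define t where "t = m / (M + 1)"
  have t: "t > 0" using m M by (simp add: t_def)
  define f where "f = (\<lambda>x. g x + (- t) * \<phi> x)"
  have mCe: "(\<lambda>x. (- t) * \<phi> x) \<in> Ce" using Ce_cmul[OF phi(1)] .
  have fCe: "f \<in> Ce" unfolding f_def using Ce_add[OF assms(3) mCe] .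
  have Tf: "T f = (\<lambda>x. T g x + (- t) * T \<phi> x)"
  proof -
    have "T f = (\<lambda>x. T g x + T (\<lambda>x. (- t) * \<phi> x) x)"
    proof -
      have add: "\<forall>f\<in>Ce. \<forall>g\<in>Ce. T (\<lambda>x. f x + g x) = (\<lambda>x. T f x + T g x)"
        using assms(1) unfolding linear_op_Ce_def by blast
      show ?thesis using add[rule_format, OF assms(3) mCe] unfolding f_def by simp
    qed
    also have "T (\<lambda>x. (- t) * \<phi> x) = (\<lambda>x. (- t) * T \<phi> x)"
    proof -
      have cm: "\<forall>f\<in>Ce. \<forall>c. T (\<lambda>x. c * f x) = (\<lambda>x. c * T f x)"
        using assms(1) unfolding linear_op_Ce_def by blast
      show ?thesis using cm[rule_format, OF phi(1), of "- t"] by simp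
    qed
    finally show ?thesis .
  qed
  have fpos: "f x > 0" if "x \<in> Sph" for x
  proof -
    have "t * \<bar>\<phi> x\<bar> \<le> t * M" using M that t by (intro mult_left_mono) auto
    also have "t * M < m" using m M by (simp add: t_def field_simps)
    finally have "t * \<bar>\<phi> x\<bar> < m" .
    moreover have "m \<le> g x" using m that by auto
    moreover have "- (t * \<phi> x) \<ge> - (t * \<bar>\<phi> x\<bar>)" using t by (simp add: abs_ge_self mult_left_mono)
    ultimately show ?thesis unfolding f_def by linarith
  qed
  have Tle: "T f x \<le> T g x" if "x \<in> Sph" for x
    using phi(2) that t unfolding Tf by (simp add: mult_nonneg_nonneg)
  have pw: "\<bar>f y\<bar> powr p \<ge> \<bar>g y\<bar> powr p + (- (p * t)) * (\<phi> y * h y)" for y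
  proof (cases "y \<in> Sph")
    case True
    have "f y powr p \<ge> g y powr p + p * g y powr (p - 1) * (f y - g y)"
      using tangent_powr[of "f y" "g y" p] fpos[OF True] assms(2,4) True by auto
    moreover have "f y - g y = - t * \<phi> y" by (simp add: f_def)
    moreover have gy: "g y > 0" using assms(4) True by auto
    ultimately show ?thesis using fpos[OF True] True
      by (simp add: h_def algebra_simps)
  next
    case False
    then have "g y = 0" "\<phi> y = 0" using gCe(3) phi(1) unfolding Ce_def by auto
    then show ?thesis using False by (simp add: f_def h_def)
  qed
  have Acont: "continuous_on Sph (\<lambda>x. \<bar>f x\<bar> powr p)"
    using Ce_cont[OF fCe] fpos by (intro continuous_intros) (auto, metis less_irrefl)
  have Bcont: "continuous_on Sph (\<lambda>x. \<bar>g x\<bar> powr p)"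
    using gc assms(4) by (intro continuous_intros) auto
  have Aint: "(\<lambda>x::'a. \<bar>f (x /\<^sub>R norm x)\<bar> powr p) integrable_on ball 0 1"
    using sph_integrable[OF Acont] by simp
  have Bint: "(\<lambda>x::'a. \<bar>g (x /\<^sub>R norm x)\<bar> powr p) integrable_on ball 0 1"
    using sph_integrable[OF Bcont] by simp
  let ?A = "integral (ball 0 1) (\<lambda>x::'a. \<bar>f (x /\<^sub>R norm x)\<bar> powr p)"
  let ?B = "integral (ball 0 1) (\<lambda>x::'a. \<bar>g (x /\<^sub>R norm x)\<bar> powr p)"
  let ?C = "integral (ball 0 1) (\<lambda>x::'a. \<phi> (x /\<^sub>R norm x) * h (x /\<^sub>R norm x))"
  have BCint: "(\<lambda>x::'a. \<bar>g (x /\<^sub>R norm x)\<bar> powr p + (- (p * t)) * (\<phi> (x /\<^sub>R norm x) * h (x /\<^sub>R norm x))) integrable_on ball 0 1"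
    by (intro integrable_add Bint integrable_on_cmult_left[OF Cint, simplified])
  have "?B + (- (p * t)) * ?C \<le> ?A"
  proof -
    have "integral (ball 0 1) (\<lambda>x::'a. \<bar>g (x /\<^sub>R norm x)\<bar> powr p + (- (p * t)) * (\<phi> (x /\<^sub>R norm x) * h (x /\<^sub>R norm x))) \<le> ?A"
      by (rule integral_le[OF BCint Aint]) (rule pw)
    moreover have "integral (ball 0 1) (\<lambda>x::'a. \<bar>g (x /\<^sub>R norm x)\<bar> powr p + (- (p * t)) * (\<phi> (x /\<^sub>R norm x) * h (x /\<^sub>R norm x)))
       = ?B + (- (p * t)) * ?C"
      using Bint integrable_on_cmult_left[OF Cint, of "- (p * t)"]
      by (subst integral_add) auto
    ultimately show ?thesis by simp
  qed
  moreover have "(- (p * t)) * ?C > 0" using IC t assms(2) by (simp add: mult_pos_neg)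
  ultimately have AB: "?B < ?A" by linarith
  have B0: "?B \<ge> 0" by (rule integral_nonneg[OF Bint]) simp
  have D: "real DIM('a) > 0" by simp
  have "Lp_norm p g < Lp_norm p f"
    unfolding Lp_norm_def sph_integral_def
    using AB B0 D assms(2) by (intro powr_less_mono2) auto
  then show ?thesis using fCe fpos Tle by blast
qed


end
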